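(* Let $G$ be a torsion-free locally compact abelian group and let $H$ be an open pure subgroup of $G$. Then $G_{op}=H_{op}$.
   Context: A subgroup $H$ of an abelian group $G$ is pure if $nH=H\cap nG$ for every positive integer $n$. For an LCA group $G$, $G_{op}$ denotes the intersection of all open pure subgroups of $G$; $H$ is regarded as an LCA group with the subspace topology. *)

theory Defs
  imports "HOL-Analysis.Analysis"
begin

text \<open>Abelian groups are modelled as a type of class ab_group_add with a topology;
  subgroups of the ambient group are subsets of the type.\<close>

definition nmul :: "nat \<Rightarrow> 'a::ab_group_add \<Rightarrow> 'a" where
  "nmul n x = (\<Sum>i<n. x)"

definition add_subgroup :: "'a::ab_group_add set \<Rightarrow> 'a set \<Rightarrow> bool" where
  "add_subgroup G H \<longleftrightarrow> H \<subseteq> G \<and> 0 \<in> H \<and> (\<forall>x\<in>H. \<forall>y\<in>H. x + y \<in> H) \<and> (\<forall>x\<in>H. - x \<in> H)"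

definition pure_subgroup :: "'a::ab_group_add set \<Rightarrow> 'a set \<Rightarrow> bool" where
  "pure_subgroup G H \<longleftrightarrow> add_subgroup G H \<and>
     (\<forall>n>0. nmul n ` H = H \<inter> nmul n ` G)"

text \<open>G_op: intersection of all open pure subgroups of G, where G carries the
  subspace topology.\<close>
definition op_part :: "'a::{ab_group_add, topological_space} set \<Rightarrow> 'a set" where
  "op_part G = \<Inter> {H. pure_subgroup G H \<and> openin (top_of_set G) H}"

definition torsion_free :: "'a::ab_group_add set \<Rightarrow> bool" where
  "torsion_free G \<longleftrightarrow> (\<forall>x\<in>G. \<forall>n>0. nmul n x = 0 \<longrightarrow> x = 0)"

definition LCA_type :: "'a::{ab_group_add, t2_space} itself \<Rightarrow> bool" where
  "LCA_type _ \<longleftrightarrow> continuous_on UNIV (\<lambda>p::'a \<times> 'a. fst p + snd p)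
      \<and> continuous_on UNIV (\<lambda>x::'a. - x)
      \<and> locally_compact_space (euclidean :: 'a topology)"

end

theory Submission
  imports Defs
begin

lemma nmul_diff: "nmul n (a - b) = nmul n a - nmul n (b::'a::ab_group_add)"
  unfolding nmul_def by (simp add: sum_subtractf)

lemma pure_closed: "pure_subgroup G K \<Longrightarrow> x \<in> K \<Longrightarrow> n > 0 \<Longrightarrow> nmul n x \<in> K"
  unfolding pure_subgroup_def by blast

theorem lemma7:
  fixes H :: "'a::{ab_group_add, t2_space} set"
  assumes "LCA_type TYPE('a)"
    and "torsion_free (UNIV :: 'a set)"
    and "pure_subgroup UNIV H"
    and "open H"
  shows "op_part (UNIV :: 'a set) = op_part H"
proof
  have pH: "\<And>n. n > 0 \<Longrightarrow> nmul n ` H = H \<inter> nmul n ` UNIV"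
    using assms(3) unfolding pure_subgroup_def by blast
  show "op_part UNIV \<subseteq> op_part H"
  proof -
    have "pure_subgroup UNIV K \<and> openin (top_of_set UNIV) K"
      if K: "pure_subgroup H K" "openin (top_of_set H) K" for K
    proof
      have sub: "add_subgroup H K" and pK: "\<And>n. n > 0 \<Longrightarrow> nmul n ` K = K \<inter> nmul n ` H"
        using K(1) unfolding pure_subgroup_def by auto
      hence KH: "K \<subseteq> H" unfolding add_subgroup_def by auto
      have "add_subgroup UNIV K" using sub unfolding add_subgroup_def by auto
      moreover have "nmul n ` K = K \<inter> nmul n ` UNIV" if "n > 0" for n
        using pK[OF that] pH[OF that] KH by blast
      ultimately show "pure_subgroup UNIV K" unfolding pure_subgroup_def by blast
      from K(2) obtain T where "open T" "K = H \<inter> T" by (auto simp: openin_open)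
      thus "openin (top_of_set UNIV) K" using assms(4) by auto
    qed
    thus ?thesis unfolding op_part_def by blast
  qed
  show "op_part H \<subseteq> op_part UNIV"
  proof -
    have "op_part H \<subseteq> K" if K: "pure_subgroup UNIV K" "openin (top_of_set UNIV) K" for K
    proof -
      have subK: "add_subgroup UNIV K" and pK: "\<And>n. n > 0 \<Longrightarrow> nmul n ` K = K \<inter> nmul n ` UNIV"
        using K(1) unfolding pure_subgroup_def by auto
      have subH: "add_subgroup UNIV H" using assms(3) unfolding pure_subgroup_def by auto
      have "add_subgroup H (K \<inter> H)" using subK subH unfolding add_subgroup_def by auto
      moreover have "nmul n ` (K \<inter> H) = (K \<inter> H) \<inter> nmul n ` H" if n: "n > 0" for n
      proof
        show "nmul n ` (K \<inter> H) \<subseteq> (K \<inter> H) \<inter> nmul n ` H"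
          using pure_closed[OF K(1) _ n] pure_closed[OF assms(3) _ n] by blast
        show "(K \<inter> H) \<inter> nmul n ` H \<subseteq> nmul n ` (K \<inter> H)"
        proof
          fix y assume y: "y \<in> (K \<inter> H) \<inter> nmul n ` H"
          then obtain h where h: "h \<in> H" "y = nmul n h" by auto
          have "y \<in> nmul n ` K" using pK[OF n] y h by auto
          then obtain k where k: "k \<in> K" "y = nmul n k" by auto
          have "nmul n (k - h) = 0" using h k by (simp add: nmul_diff)
          hence "k - h = 0" using assms(2) n unfolding torsion_free_def by blast
          hence "k = h" by simp
          thus "y \<in> nmul n ` (K \<inter> H)" using h k by auto
        qed
      qed
      ultimately have "pure_subgroup H (K \<inter> H)" unfolding pure_subgroup_def by blast
      moreover have "openin (top_of_set H) (K \<inter> H)"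
        using K(2) by (auto simp: openin_open)
      ultimately have "op_part H \<subseteq> K \<inter> H" unfolding op_part_def by blast
      thus ?thesis by blast
    qed
    thus ?thesis unfolding op_part_def[of UNIV] by blast
  qed
qed

end
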